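(* Let $M\ge1$ and for $d\in\{0,1\}$ let $\alpha_d(y)=\mathbb{P}(Y(d)=y,R(d)=1)$, $y\in[M]$. Suppose the response mechanism is the same in both arms, so that the identification set is \[\mathcal T=\Big\{\sum_{y=1}^M y\big(\alpha_1(y)-\alpha_0(y)\big)(w(y)+1):\ w\in\mathbb{R}^M,\ w\ge0,\ \sum_{y}\alpha_1(y)(w(y)+1)=1,\ \sum_y\alpha_0(y)(w(y)+1)=1\Big\}.\] Suppose there exists $y_0\in[M]$ such that $\alpha_1(y)\le\alpha_0(y)$ for all $y<y_0$ and $\alpha_1(y)\ge\alpha_0(y)$ for all $y\ge y_0$. Then $\tau\ge0$ for every $\tau\in\mathcal T$.
   Context: $Y(d)\in[M]$ and $R(d)\in\{0,1\}$ are the potential outcome and potential observation indicator under treatment $d$ in a randomized experiment; the common weight $w(y)$ plays the role of $1/\pi(y)-1$ where $\pi(y)=\mathbb{P}(R(1)=1\mid Y(1)=y)=\mathbb{P}(R(0)=1\mid Y(0)=y)$. $\mathcal T$ is the identification set for $\mathbb{E}[Y(1)-Y(0)]$ under this restriction. *)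

theory Defs
  imports "HOL-Analysis.Analysis"
begin

text \<open>Outcomes take values in [M] = {1..M}. alpha1 y = P(Y(1)=y, R(1)=1),
  alpha0 y = P(Y(0)=y, R(0)=1). The identification set of E[Y(1)-Y(0)]
  when the response mechanism is common to both arms.\<close>

definition ident_set :: "nat \<Rightarrow> (nat \<Rightarrow> real) \<Rightarrow> (nat \<Rightarrow> real) \<Rightarrow> real set" where
  "ident_set M alpha1 alpha0 =
     {(\<Sum>y=1..M. real y * (alpha1 y - alpha0 y) * (w y + 1)) | w.
        (\<forall>y\<in>{1..M}. w y \<ge> 0) \<and>
        (\<Sum>y=1..M. alpha1 y * (w y + 1)) = 1 \<and>
        (\<Sum>y=1..M. alpha0 y * (w y + 1)) = 1}"

end

theory Submission
  imports Defs
begin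

theorem proposition6:
  fixes M :: nat and alpha1 alpha0 :: "nat \<Rightarrow> real" and y0 :: nat and tau :: real
  assumes "M \<ge> 1"
    and "\<forall>y\<in>{1..M}. alpha1 y \<ge> 0" and "\<forall>y\<in>{1..M}. alpha0 y \<ge> 0"
    and "(\<Sum>y=1..M. alpha1 y) \<le> 1" and "(\<Sum>y=1..M. alpha0 y) \<le> 1"
    and "y0 \<in> {1..M}"
    and "\<forall>y\<in>{1..M}. y < y0 \<longrightarrow> alpha1 y \<le> alpha0 y"
    and "\<forall>y\<in>{1..M}. y \<ge> y0 \<longrightarrow> alpha1 y \<ge> alpha0 y"
    and "tau \<in> ident_set M alpha1 alpha0"
  shows "tau \<ge> 0"
proof -
  obtain w where tau: "tau = (\<Sum>y=1..M. real y * (alpha1 y - alpha0 y) * (w y + 1))"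
    and wpos: "\<forall>y\<in>{1..M}. w y \<ge> 0"
    and s1: "(\<Sum>y=1..M. alpha1 y * (w y + 1)) = 1"
    and s0: "(\<Sum>y=1..M. alpha0 y * (w y + 1)) = 1"
    using assms(9) unfolding ident_set_def by blast
  define d where "d y = (alpha1 y - alpha0 y) * (w y + 1)" for y
  have sd: "(\<Sum>y=1..M. d y) = 0"
    using s1 s0 by (simp add: d_def left_diff_distrib sum_subtractf)
  have "tau = (\<Sum>y=1..M. (real y - real y0) * d y) + real y0 * (\<Sum>y=1..M. d y)"
  proof -
    have "(\<Sum>y=1..M. (real y - real y0) * d y) + real y0 * (\<Sum>y=1..M. d y)
        = (\<Sum>y=1..M. (real y - real y0) * d y + real y0 * d y)"
      by (simp add: sum.distrib sum_distrib_left)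
    also have "\<dots> = (\<Sum>y=1..M. real y * d y)" by (simp add: algebra_simps)
    finally show ?thesis by (simp add: tau d_def mult.assoc)
  qed
  also have "\<dots> = (\<Sum>y=1..M. (real y - real y0) * d y)" using sd by simp
  also have "\<dots> \<ge> 0"
  proof (rule sum_nonneg)
    fix y assume y: "y \<in> {1..M}"
    have w1: "w y + 1 > 0" using wpos y by (smt (verit))
    show "0 \<le> (real y - real y0) * d y"
    proof (cases "y < y0")
      case True
      then have "alpha1 y - alpha0 y \<le> 0" using assms(7) y by auto
      then have "d y \<le> 0" using w1 unfolding d_def by (simp add: mult_nonpos_nonneg)
      moreover have "real y - real y0 \<le> 0" using True by simp
      ultimately show ?thesis by (simp add: mult_nonpos_nonpos)
    next
      case False
      then have "alpha1 y - alpha0 y \<ge> 0" using assms(8) y by auto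
      then have "d y \<ge> 0" using w1 unfolding d_def by simp
      moreover have "real y - real y0 \<ge> 0" using False by simp
      ultimately show ?thesis by simp
    qed
  qed
  finally show ?thesis .
qed

end
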